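(* Consider any algorithm in $\mathcal{A}$ run over either the nearest-neighbor graph $\mathcal{G}^\mu_{x(k)}$ or the nearest-value graph $\mathcal{G}^{\mu v}_{x(k)}$ (for some positive integer $\mu$). For any two nodes $u,v\in\mathcal{V}$ and any time $k$: (i) if $x_u(k)=x_v(k)$ then $x_u(k+1)=x_v(k+1)$; (ii) if $x_u(k)<x_v(k)$ then $x_u(k+1)\le x_v(k+1)$.
   Context: Nodes $\mathcal{V}=\{1,\dots,n\}$, $n\ge3$, states $x_i(k)\in\mathbb{R}$, discrete time. The algorithm class $\mathcal{A}$: each node updates $$x_i(k+1)=\eta_k x_i(k)+\alpha_k\min_{j\in\mathcal{N}_i(k)}x_j(k)+(1-\eta_k-\alpha_k)\max_{j\in\mathcal{N}_i(k)}x_j(k),$$ with node-independent parameters $\eta_k\in[0,1]$, $\alpha_k\in[0,1-\eta_k]$; here $\mathcal{N}_i(k)=\{i\}\cup\mathcal{N}_i^-(k)\cup\mathcal{N}_i^+(k)$. Nearest-neighbor graph $\mathcal{G}^\mu_{x(k)}$: $\mathcal{N}_i^-(k)$ is a set of $\min(\mu,|\{j:x_j(k)<x_i(k)\}|)$ nodes $j$ with $x_j(k)<x_i(k)$ whose values are closest to $x_i(k)$ among such nodes (ties broken arbitrarily), and $\mathcal{N}_i^+(k)$ is defined symmetrically from $\{j: x_j(k)>x_i(k)\}$. Nearest-value graph $\mathcal{G}^{\mu v}_{x(k)}$: $\mathcal{N}_i^-(k)$ is a set of nodes $j$ with $x_j(k)<x_i(k)$ having pairwise distinct values, these values being exactly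 the $\mu$ largest distinct values smaller than $x_i(k)$ (all such distinct values if there are fewer than $\mu$); $\mathcal{N}_i^+(k)$ is defined symmetrically using the $\mu$ smallest distinct values larger than $x_i(k)$. *)

theory Defs
  imports Complex_Main
begin

text \<open>Node set V = {1..n}; a state is a function x :: nat => real on node labels.
  Neighbour sets are given as functions Nm, Np :: nat => nat set (lower / upper neighbours).\<close>

definition lower_nodes :: "nat set \<Rightarrow> (nat \<Rightarrow> real) \<Rightarrow> nat \<Rightarrow> nat set" where
  "lower_nodes V x i = {j \<in> V. x j < x i}"

definition upper_nodes :: "nat set \<Rightarrow> (nat \<Rightarrow> real) \<Rightarrow> nat \<Rightarrow> nat set" where
  "upper_nodes V x i = {j \<in> V. x j > x i}"

text \<open>Nearest-neighbour graph G^mu_x: Nm i / Np i are valid choices (ties arbitrary).\<close>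
definition nn_graph :: "nat \<Rightarrow> nat set \<Rightarrow> (nat \<Rightarrow> real) \<Rightarrow> (nat \<Rightarrow> nat set) \<Rightarrow> (nat \<Rightarrow> nat set) \<Rightarrow> bool" where
  "nn_graph \<mu> V x Nm Np \<longleftrightarrow> (\<forall>i\<in>V.
     Nm i \<subseteq> lower_nodes V x i \<and> card (Nm i) = min \<mu> (card (lower_nodes V x i)) \<and>
     (\<forall>j\<in>Nm i. \<forall>j'\<in>lower_nodes V x i - Nm i. x j' \<le> x j) \<and>
     Np i \<subseteq> upper_nodes V x i \<and> card (Np i) = min \<mu> (card (upper_nodes V x i)) \<and>
     (\<forall>j\<in>Np i. \<forall>j'\<in>upper_nodes V x i - Np i. x j \<le> x j'))"

definition nv_graph :: "nat \<Rightarrow> nat set \<Rightarrow> (nat \<Rightarrow> real) \<Rightarrow> (nat \<Rightarrow> nat set) \<Rightarrow> (nat \<Rightarrow> nat set) \<Rightarrow> bool" where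
  "nv_graph \<mu> V x Nm Np \<longleftrightarrow> (\<forall>i\<in>V.
     Nm i \<subseteq> lower_nodes V x i \<and> inj_on x (Nm i) \<and>
     card (x ` Nm i) = min \<mu> (card (x ` lower_nodes V x i)) \<and>
     (\<forall>w\<in>x ` Nm i. \<forall>w'\<in>x ` lower_nodes V x i - x ` Nm i. w' < w) \<and>
     Np i \<subseteq> upper_nodes V x i \<and> inj_on x (Np i) \<and>
     card (x ` Np i) = min \<mu> (card (x ` upper_nodes V x i)) \<and>
     (\<forall>w\<in>x ` Np i. \<forall>w'\<in>x ` upper_nodes V x i - x ` Np i. w < w'))"

definition nbhd :: "(nat \<Rightarrow> nat set) \<Rightarrow> (nat \<Rightarrow> nat set) \<Rightarrow> nat \<Rightarrow> nat set" where
  "nbhd Nm Np i = {i} \<union> Nm i \<union> Np i"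

definition alg_step :: "nat set \<Rightarrow> real \<Rightarrow> real \<Rightarrow> (nat \<Rightarrow> real) \<Rightarrow> (nat \<Rightarrow> nat set) \<Rightarrow> (nat \<Rightarrow> nat set) \<Rightarrow> (nat \<Rightarrow> real) \<Rightarrow> bool" where
  "alg_step V \<eta> \<alpha> x Nm Np x' \<longleftrightarrow> (\<forall>i\<in>V.
     x' i = \<eta> * x i + \<alpha> * Min (x ` nbhd Nm Np i) + (1 - \<eta> - \<alpha>) * Max (x ` nbhd Nm Np i))"

end

theory Submission
  imports Defs
begin

lemma key:
  fixes f :: "'a \<Rightarrow> real"
  assumes fin: "finite Lv" and sub: "Lu \<subseteq> Lv" and Au: "Au \<subseteq> Lu" and Av: "Av \<subseteq> Lv"
    and cu: "card Au = min \<mu> (card Lu)" and cv: "card Av = min \<mu> (card Lv)"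
    and ou: "\<forall>a\<in>Au. \<forall>b\<in>Lu - Au. f b \<le> f a"
    and ov: "\<forall>a\<in>Av. \<forall>b\<in>Lv - Av. f b \<le> f a"
    and j: "j \<in> Av" "j \<in> Lu" and lt: "\<forall>a\<in>Au. f j < f a"
  shows False
proof -
  have finu: "finite Lu" using fin sub finite_subset by blast
  have jn: "j \<notin> Au" using lt by auto
  have "Au \<subset> Lu" using Au j jn by blast
  hence "card Au < card Lu" using finu psubset_card_mono by blast
  hence cAu: "card Au = \<mu>" using cu by linarith
  have "Au \<subseteq> Av"
  proof
    fix a assume a: "a \<in> Au"
    show "a \<in> Av"
    proof (rule ccontr)
      assume "a \<notin> Av"
      hence "f a \<le> f j" using ov j a Au sub by blast
      thus False using lt a by force
    qed
  qed
  hence "insert j Au \<subseteq> Av" using j by blast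
  moreover have "finite Av" using Av fin finite_subset by blast
  ultimately have "card (insert j Au) \<le> card Av" using card_mono by blast
  moreover have "finite Au" using Au finu finite_subset by blast
  ultimately have "\<mu> + 1 \<le> card Av" using jn cAu by simp
  thus False using cv by linarith
qed

lemma lower_mono: "x u \<le> x v \<Longrightarrow> lower_nodes V x u \<subseteq> lower_nodes V x v"
  unfolding lower_nodes_def by auto

lemma upper_mono: "x u \<le> x v \<Longrightarrow> upper_nodes V x v \<subseteq> upper_nodes V x u"
  unfolding upper_nodes_def by auto

lemma min_mono:
  fixes x :: "nat \<Rightarrow> real"
  assumes G: "nn_graph \<mu> {1..n} x Nm Np \<or> nv_graph \<mu> {1..n} x Nm Np"
    and u: "u \<in> {1..n}" and v: "v \<in> {1..n}" and le: "x u \<le> x v"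
  shows "Min (x ` nbhd Nm Np u) \<le> Min (x ` nbhd Nm Np v)"
proof -
  let ?V = "{1..n::nat}"
  have subs: "\<And>i. i \<in> ?V \<Longrightarrow> Nm i \<subseteq> lower_nodes ?V x i \<and> Np i \<subseteq> upper_nodes ?V x i"
    using G unfolding nn_graph_def nv_graph_def by blast
  have finL: "\<And>i. finite (lower_nodes ?V x i)" unfolding lower_nodes_def by simp
  have finU: "\<And>i. finite (upper_nodes ?V x i)" unfolding upper_nodes_def by simp
  have finN: "\<And>i. i \<in> ?V \<Longrightarrow> finite (nbhd Nm Np i)"
    unfolding nbhd_def using subs finL finU finite_subset by (metis finite_Un finite.emptyI finite.insertI)
  have ne: "\<And>i. x ` nbhd Nm Np i \<noteq> {}" unfolding nbhd_def by blast
  obtain j where jN: "j \<in> nbhd Nm Np v" and jm: "x j = Min (x ` nbhd Nm Np v)"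
    using Min_in[OF finite_imageI[OF finN[OF v]] ne[of v]] by auto
  have Mu: "\<And>a. a \<in> nbhd Nm Np u \<Longrightarrow> Min (x ` nbhd Nm Np u) \<le> x a"
    using finN[OF u] by simp
  show ?thesis
  proof (cases "x u \<le> x j")
    case True
    then show ?thesis using Mu[of u] jm unfolding nbhd_def by auto
  next
    case False
    hence jlt: "x j < x u" by simp
    have "j \<noteq> v" using jlt le by auto
    moreover have "j \<notin> Np v" using subs[OF v] jlt le unfolding upper_nodes_def by auto
    ultimately have jv: "j \<in> Nm v" using jN unfolding nbhd_def by auto
    have jLu: "j \<in> lower_nodes ?V x u" using jv subs[OF v] jlt unfolding lower_nodes_def by auto
    show ?thesis
    proof (rule ccontr)
      assume "\<not> ?thesis"
      hence lt: "\<forall>a\<in>Nm u. x j < x a" using Mu jm unfolding nbhd_def by force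
      from G show False
      proof
        assume nn: "nn_graph \<mu> ?V x Nm Np"
        show False
          apply (rule key[of "lower_nodes ?V x v" "lower_nodes ?V x u" "Nm u" "Nm v" \<mu> x j])
          using nn u v finL lower_mono[OF le] jv jLu lt unfolding nn_graph_def by blast+
      next
        assume nv: "nv_graph \<mu> ?V x Nm Np"
          have fu: "Nm u \<subseteq> lower_nodes ?V x u" "card (x ` Nm u) = min \<mu> (card (x ` lower_nodes ?V x u))"
            "\<forall>w\<in>x ` Nm u. \<forall>w'\<in>x ` lower_nodes ?V x u - x ` Nm u. w' < w"
            using nv u unfolding nv_graph_def by blast+
          have fv: "Nm v \<subseteq> lower_nodes ?V x v" "card (x ` Nm v) = min \<mu> (card (x ` lower_nodes ?V x v))"
            "\<forall>w\<in>x ` Nm v. \<forall>w'\<in>x ` lower_nodes ?V x v - x ` Nm v. w' < w"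
            using nv v unfolding nv_graph_def by blast+
          show False
          proof (rule key[of "x ` lower_nodes ?V x v" "x ` lower_nodes ?V x u" "x ` Nm u" "x ` Nm v" \<mu> "\<lambda>r. r" "x j"])
            show "finite (x ` lower_nodes ?V x v)" using finL by blast
            show "x ` lower_nodes ?V x u \<subseteq> x ` lower_nodes ?V x v" using lower_mono[OF le] by blast
            show "x ` Nm u \<subseteq> x ` lower_nodes ?V x u" using fu(1) by blast
            show "x ` Nm v \<subseteq> x ` lower_nodes ?V x v" using fv(1) by blast
            show "card (x ` Nm u) = min \<mu> (card (x ` lower_nodes ?V x u))" by (rule fu(2))
            show "card (x ` Nm v) = min \<mu> (card (x ` lower_nodes ?V x v))" by (rule fv(2))
            show "\<forall>a\<in>x ` Nm u. \<forall>b\<in>x ` lower_nodes ?V x u - x ` Nm u. b \<le> a"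
              using fu(3) by (meson less_imp_le)
            show "\<forall>a\<in>x ` Nm v. \<forall>b\<in>x ` lower_nodes ?V x v - x ` Nm v. b \<le> a"
              using fv(3) by (meson less_imp_le)
            show "x j \<in> x ` Nm v" using jv by blast
            show "x j \<in> x ` lower_nodes ?V x u" using jLu by blast
            show "\<forall>a\<in>x ` Nm u. x j < a" using lt by blast
          qed
      qed
    qed
  qed
qed


lemma max_mono:
  fixes x :: "nat \<Rightarrow> real"
  assumes G: "nn_graph \<mu> {1..n} x Nm Np \<or> nv_graph \<mu> {1..n} x Nm Np"
    and u: "u \<in> {1..n}" and v: "v \<in> {1..n}" and le: "x u \<le> x v"
  shows "Max (x ` nbhd Nm Np u) \<le> Max (x ` nbhd Nm Np v)"
proof -
  let ?V = "{1..n::nat}"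
  have subs: "\<And>i. i \<in> ?V \<Longrightarrow> Nm i \<subseteq> lower_nodes ?V x i \<and> Np i \<subseteq> upper_nodes ?V x i"
    using G unfolding nn_graph_def nv_graph_def by blast
  have finL: "\<And>i. finite (lower_nodes ?V x i)" unfolding lower_nodes_def by simp
  have finU: "\<And>i. finite (upper_nodes ?V x i)" unfolding upper_nodes_def by simp
  have finN: "\<And>i. i \<in> ?V \<Longrightarrow> finite (nbhd Nm Np i)"
    unfolding nbhd_def using subs finL finU finite_subset by (metis finite_Un finite.emptyI finite.insertI)
  have ne: "\<And>i. x ` nbhd Nm Np i \<noteq> {}" unfolding nbhd_def by blast
  obtain j where jN: "j \<in> nbhd Nm Np u" and jm: "x j = Max (x ` nbhd Nm Np u)"
    using Max_in[OF finite_imageI[OF finN[OF u]] ne[of u]] by auto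
  have Mu: "\<And>a. a \<in> nbhd Nm Np v \<Longrightarrow> x a \<le> Max (x ` nbhd Nm Np v)"
    using finN[OF v] by simp
  show ?thesis
  proof (cases "x j \<le> x v")
    case True
    then show ?thesis using Mu[of v] jm le unfolding nbhd_def by auto
  next
    case False
    hence jlt: "x v < x j" by simp
    have "j \<noteq> u" using jlt le by auto
    moreover have "j \<notin> Nm u" using subs[OF u] jlt le unfolding lower_nodes_def by auto
    ultimately have jv: "j \<in> Np u" using jN unfolding nbhd_def by auto
    have jLu: "j \<in> upper_nodes ?V x v" using jv subs[OF u] jlt unfolding upper_nodes_def by auto
    show ?thesis
    proof (rule ccontr)
      assume "\<not> ?thesis"
      hence lt: "\<forall>a\<in>Np v. x a < x j" using Mu jm unfolding nbhd_def by force
      from G show False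
      proof
        assume nn: "nn_graph \<mu> ?V x Nm Np"
        show False
          apply (rule key[of "upper_nodes ?V x u" "upper_nodes ?V x v" "Np v" "Np u" \<mu> "\<lambda>i. - x i" j])
          using nn u v finU upper_mono[OF le] jv jLu lt unfolding nn_graph_def neg_le_iff_le neg_less_iff_less by blast+
      next
        assume nv: "nv_graph \<mu> ?V x Nm Np"
          have fu: "Np u \<subseteq> upper_nodes ?V x u" "card (x ` Np u) = min \<mu> (card (x ` upper_nodes ?V x u))"
            "\<forall>w\<in>x ` Np u. \<forall>w'\<in>x ` upper_nodes ?V x u - x ` Np u. w < w'"
            using nv u unfolding nv_graph_def by blast+
          have fv: "Np v \<subseteq> upper_nodes ?V x v" "card (x ` Np v) = min \<mu> (card (x ` upper_nodes ?V x v))"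
            "\<forall>w\<in>x ` Np v. \<forall>w'\<in>x ` upper_nodes ?V x v - x ` Np v. w < w'"
            using nv v unfolding nv_graph_def by blast+
          show False
          proof (rule key[of "x ` upper_nodes ?V x u" "x ` upper_nodes ?V x v" "x ` Np v" "x ` Np u" \<mu> "\<lambda>r. - r" "x j"])
            show "finite (x ` upper_nodes ?V x u)" using finU by blast
            show "x ` upper_nodes ?V x v \<subseteq> x ` upper_nodes ?V x u" using upper_mono[OF le] by blast
            show "x ` Np v \<subseteq> x ` upper_nodes ?V x v" using fv(1) by blast
            show "x ` Np u \<subseteq> x ` upper_nodes ?V x u" using fu(1) by blast
            show "card (x ` Np v) = min \<mu> (card (x ` upper_nodes ?V x v))" by (rule fv(2))
            show "card (x ` Np u) = min \<mu> (card (x ` upper_nodes ?V x u))" by (rule fu(2))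
            show "\<forall>a\<in>x ` Np v. \<forall>b\<in>x ` upper_nodes ?V x v - x ` Np v. - b \<le> - a"
              using fv(3) by (meson less_imp_le neg_le_iff_le)
            show "\<forall>a\<in>x ` Np u. \<forall>b\<in>x ` upper_nodes ?V x u - x ` Np u. - b \<le> - a"
              using fu(3) by (meson less_imp_le neg_le_iff_le)
            show "x j \<in> x ` Np u" using jv by blast
            show "x j \<in> x ` upper_nodes ?V x v" using jLu by blast
            show "\<forall>a\<in>x ` Np v. - x j < - a" using lt by auto
          qed
      qed
    qed
  qed
qed


theorem lemma2:
  fixes n \<mu> :: nat
    and x :: "nat \<Rightarrow> nat \<Rightarrow> real"
    and \<eta> \<alpha> :: "nat \<Rightarrow> real"
    and Nm Np :: "nat \<Rightarrow> nat \<Rightarrow> nat set"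
  assumes "n \<ge> 3"
    and "\<mu> > 0"
    and "\<And>k. 0 \<le> \<eta> k \<and> \<eta> k \<le> 1"
    and "\<And>k. 0 \<le> \<alpha> k \<and> \<alpha> k \<le> 1 - \<eta> k"
    and "(\<forall>k. nn_graph \<mu> {1..n} (x k) (Nm k) (Np k)) \<or>
         (\<forall>k. nv_graph \<mu> {1..n} (x k) (Nm k) (Np k))"
    and "\<And>k. alg_step {1..n} (\<eta> k) (\<alpha> k) (x k) (Nm k) (Np k) (x (Suc k))"
    and "u \<in> {1..n}" and "v \<in> {1..n}"
  shows "(x k u = x k v \<longrightarrow> x (Suc k) u = x (Suc k) v) \<and>
         (x k u < x k v \<longrightarrow> x (Suc k) u \<le> x (Suc k) v)"
proof -
  have G: "nn_graph \<mu> {1..n} (x k) (Nm k) (Np k) \<or> nv_graph \<mu> {1..n} (x k) (Nm k) (Np k)"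
    using assms(5) by blast
  have mono: "x (Suc k) a \<le> x (Suc k) b" if ab: "a \<in> {1..n}" "b \<in> {1..n}" "x k a \<le> x k b" for a b
  proof -
    let ?mA = "Min (x k ` nbhd (Nm k) (Np k) a)" and ?mB = "Min (x k ` nbhd (Nm k) (Np k) b)"
    let ?MA = "Max (x k ` nbhd (Nm k) (Np k) a)" and ?MB = "Max (x k ` nbhd (Nm k) (Np k) b)"
    have m: "?mA \<le> ?mB" by (rule min_mono[OF G ab])
    have M: "?MA \<le> ?MB" by (rule max_mono[OF G ab])
    have e: "0 \<le> \<eta> k" and al: "0 \<le> \<alpha> k" and r: "0 \<le> 1 - \<eta> k - \<alpha> k"
      using assms(3)[of k] assms(4)[of k] by auto
    have "\<eta> k * x k a \<le> \<eta> k * x k b" by (rule mult_left_mono[OF ab(3) e])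
    moreover have "\<alpha> k * ?mA \<le> \<alpha> k * ?mB" using al m by (simp add: mult_left_mono)
    moreover have "(1 - \<eta> k - \<alpha> k) * ?MA \<le> (1 - \<eta> k - \<alpha> k) * ?MB" by (rule mult_left_mono[OF M r])
    ultimately show ?thesis using assms(6)[of k] ab unfolding alg_step_def by auto
  qed
  show ?thesis using mono[of u v] mono[of v u] assms(7,8) by auto
qed

end
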